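(* Let $\alpha_1,\alpha_2\in\mathbb{R}\setminus\{0\}$ with $\alpha_1\ne\alpha_2$. Then there exist $\varepsilon=\varepsilon(\alpha_1,\alpha_2)>0$ and $C=C(\alpha_1,\alpha_2)$ such that for all $s\in\mathbb{R}$, all $\frac12<b\le\frac23$, and all $\beta_1,\beta_2\in\mathbb{R}$ with $|\beta_2-\beta_1|\le\varepsilon$, \[ \|\partial_xw\|_{X^{\alpha_2,\beta_2}_{s,b-1}}\le C\|w\|_{X^{\alpha_1,\beta_1}_{s,b}}\quad\text{for all } w\in X^{\alpha_1,\beta_1}_{s,b}. \]
   Context: For $\alpha\ne0$, $\beta\in\mathbb{R}$ let $\phi^{\alpha,\beta}(\xi)=\alpha\xi^3-\beta\xi$ and $\langle x\rangle=1+|x|$. For $s,b\in\mathbb{R}$ the Fourier restriction space $X^{\alpha,\beta}_{s,b}$ is the completion of the Schwartz space $\mathscr{S}(\mathbb{R}^2)$ under the norm $\|w\|_{X^{\alpha,\beta}_{s,b}}=\|\langle\xi\rangle^s\langle\tau-\phi^{\alpha,\beta}(\xi)\rangle^b\widehat w(\xi,\tau)\|_{L^2(d\xi\,d\tau)}$, where $\widehat w$ is the space-time Fourier transform. *)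

theory Defs
  imports "HOL-Analysis.Analysis"
begin

text \<open>Japanese-bracket convention of the paper: 1 + |x|.\<close>
definition jbr :: "real \<Rightarrow> real" where
  "jbr x = 1 + \<bar>x\<bar>"

definition phi :: "real \<Rightarrow> real \<Rightarrow> real \<Rightarrow> real" where
  "phi \<alpha> \<beta> \<xi> = \<alpha> * \<xi> ^ 3 - \<beta> * \<xi>"

text \<open>Elements of X^{alpha,beta}_{s,b} are represented on the Fourier side:
  by Plancherel, the completion of the Schwartz space under the X-norm is
  (isometrically) the weighted L^2 space of space-time Fourier transforms
  w-hat(xi,tau).\<close>
definition X_sq :: "real \<Rightarrow> real \<Rightarrow> real \<Rightarrow> real \<Rightarrow> (real \<times> real \<Rightarrow> complex) \<Rightarrow> ennreal" where
  "X_sq \<alpha> \<beta> s b g =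
     (\<integral>\<^sup>+ p. ennreal ((jbr (fst p) powr s * jbr (snd p - phi \<alpha> \<beta> (fst p)) powr b
                          * cmod (g p)) ^ 2) \<partial>lborel)"

definition X_space :: "real \<Rightarrow> real \<Rightarrow> real \<Rightarrow> real \<Rightarrow> (real \<times> real \<Rightarrow> complex) set" where
  "X_space \<alpha> \<beta> s b = {g. g \<in> borel_measurable lborel \<and> X_sq \<alpha> \<beta> s b g < \<infinity>}"

definition X_norm :: "real \<Rightarrow> real \<Rightarrow> real \<Rightarrow> real \<Rightarrow> (real \<times> real \<Rightarrow> complex) \<Rightarrow> real" where
  "X_norm \<alpha> \<beta> s b g = sqrt (enn2real (X_sq \<alpha> \<beta> s b g))"

definition dx_hat :: "(real \<times> real \<Rightarrow> complex) \<Rightarrow> (real \<times> real \<Rightarrow> complex)" where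
  "dx_hat g = (\<lambda>p. \<i> * complex_of_real (fst p) * g p)"

end

theory Submission
  imports Defs
begin

lemma cube_bound:
  fixes a x d :: real
  assumes a: "a > 0" and x: "x \<ge> 0" and M: "M \<ge> 1" and d: "2 * M \<ge> a * x^3 - x"
  shows "x^3 \<le> (4/a + (2/a)*(1+2/a)) * M"
proof (cases "a * x^3 / 2 \<ge> x")
  case True
  then have "a * x^3 \<le> 4 * M" using d by linarith
  then have "x^3 \<le> (4/a) * M" using a by (simp add: field_simps)
  moreover have "0 \<le> (2/a)*(1+2/a) * M" using a M by simp
  ultimately have "x^3 \<le> (4/a) * M + (2/a)*(1+2/a) * M" by linarith
  then show ?thesis by (simp add: algebra_simps)
next
  case False
  then have h: "a * x^3 < 2 * x" by linarith
  have x3: "x^3 = x * x^2" by (simp add: power3_eq_cube power2_eq_square)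
  have xx: "x^2 * a < 2"
  proof (cases "x = 0")
    case True then show ?thesis by simp
  next
    case False
    then have "x > 0" using x by simp
    have "x * (x^2 * a) < x * 2" using h by (simp add: power3_eq_cube power2_eq_square algebra_simps)
    then show ?thesis using \<open>x>0\<close> by simp
  qed
  then have x2: "x^2 \<le> 2/a" using a by (simp add: field_simps)
  have x1: "x \<le> 1 + 2/a"
  proof (cases "x \<le> 1")
    case True then show ?thesis using a by (smt (verit) divide_pos_pos)
  next
    case False then have "x \<le> x^2" by (simp add: power2_eq_square)
    then show ?thesis using x2 by linarith
  qed
  have "x^3 \<le> (2/a) * (1 + 2/a)" unfolding x3
    using mult_mono[OF x1 x2] x a by (simp add: mult.commute)
  also have "\<dots> \<le> (2/a) * (1 + 2/a) * M"
    using mult_left_mono[OF M, of "(2/a) * (1 + 2/a)"] a by simp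
  also have "\<dots> \<le> (4/a + (2/a)*(1+2/a)) * M"
  proof -
    have "0 \<le> 4/a*M" using a M by simp
    then show ?thesis by (simp add: distrib_right)
  qed
  finally show ?thesis .
qed

lemma meas_int:
  assumes gm: "g \<in> borel_measurable lborel"
  shows "(\<lambda>p::real\<times>real. ennreal ((jbr (fst p) powr s * jbr (snd p - phi a bb (fst p)) powr b * cmod (g p)) ^ 2)) \<in> borel_measurable lborel"
proof -
  have h: "(\<lambda>p::real\<times>real. jbr (fst p) powr s * jbr (snd p - phi a bb (fst p)) powr b) \<in> borel_measurable borel"
    unfolding jbr_def phi_def
    by (intro borel_measurable_continuous_onI continuous_intros) (auto simp: add_pos_nonneg[THEN less_imp_neq, symmetric] abs_add_one_gt_zero[THEN less_imp_neq, symmetric]|smt (verit) abs_ge_zero)+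
  have n: "(\<lambda>p. cmod (g p)) \<in> borel_measurable borel" using gm by simp
  have "(\<lambda>p. (jbr (fst p) powr s * jbr (snd p - phi a bb (fst p)) powr b * cmod (g p)) ^ 2) \<in> borel_measurable borel"
    by (intro borel_measurable_power borel_measurable_times h n)
  then show ?thesis by simp
qed

lemma pointwise:
  fixes \<alpha>1 \<alpha>2 \<beta>1 \<beta>2 \<xi> \<tau> b :: real
  assumes a: "\<alpha>1 \<noteq> \<alpha>2" and bb: "1/2 < b" "b \<le> 2/3" and be: "\<bar>\<beta>2 - \<beta>1\<bar> \<le> 1"
  shows "\<bar>\<xi>\<bar> * jbr (\<tau> - phi \<alpha>2 \<beta>2 \<xi>) powr (b - 1)
     \<le> ((4/\<bar>\<alpha>2-\<alpha>1\<bar> + (2/\<bar>\<alpha>2-\<alpha>1\<bar>)*(1+2/\<bar>\<alpha>2-\<alpha>1\<bar>)) powr (1/3))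
        * jbr (\<tau> - phi \<alpha>1 \<beta>1 \<xi>) powr b"
proof -
  define A where "A = \<bar>\<alpha>2-\<alpha>1\<bar>"
  define K where "K = 4/A + (2/A)*(1+2/A)"
  define J1 where "J1 = jbr (\<tau> - phi \<alpha>1 \<beta>1 \<xi>)"
  define J2 where "J2 = jbr (\<tau> - phi \<alpha>2 \<beta>2 \<xi>)"
  define x where "x = \<bar>\<xi>\<bar>"
  define M where "M = max J1 J2"
  have A: "A > 0" using a unfolding A_def by simp
  have K: "K \<ge> 0" using A unfolding K_def by simp
  have J1: "J1 \<ge> 1" and J2: "J2 \<ge> 1" unfolding J1_def J2_def jbr_def by auto
  have M1: "M \<ge> 1" using J1 unfolding M_def by simp
  have x: "x \<ge> 0" unfolding x_def by simp
  have diff: "(\<tau> - phi \<alpha>1 \<beta>1 \<xi>) - (\<tau> - phi \<alpha>2 \<beta>2 \<xi>) = (\<alpha>2-\<alpha>1)*\<xi>^3 - (\<beta>2-\<beta>1)*\<xi>"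
    unfolding phi_def by (simp add: algebra_simps)
  have "\<bar>(\<alpha>2-\<alpha>1)*\<xi>^3\<bar> = A * x^3" unfolding A_def x_def by (simp add: abs_mult power_abs)
  moreover have "\<bar>(\<beta>2-\<beta>1)*\<xi>\<bar> \<le> x" unfolding x_def using be
    by (simp add: abs_mult mult_left_le_one_le)
  ultimately have "A * x^3 - x \<le> \<bar>(\<tau> - phi \<alpha>1 \<beta>1 \<xi>) - (\<tau> - phi \<alpha>2 \<beta>2 \<xi>)\<bar>"
    unfolding diff by linarith
  also have "\<dots> \<le> J1 + J2" unfolding J1_def J2_def jbr_def by linarith
  also have "\<dots> \<le> 2 * M" unfolding M_def by linarith
  finally have d: "A * x^3 - x \<le> 2 * M" .
  have c3: "x^3 \<le> K * M" using cube_bound[OF A x M1 d] unfolding K_def .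
  have "x = (x^3) powr (1/3)"
  proof (cases "x = 0")
    case False
    then have "x > 0" using x by simp
    then have "(x^3) powr (1/3) = (x powr 3) powr (1/3)" by (simp add: powr_realpow)
    also have "\<dots> = x" using \<open>x > 0\<close> by (simp only: powr_powr) simp
    finally show ?thesis by (rule sym)
  qed simp
  also have "\<dots> \<le> (K * M) powr (1/3)" using c3 x by (simp add: powr_mono2)
  also have "\<dots> = K powr (1/3) * M powr (1/3)" using K M1 by (simp add: powr_mult)
  finally have xb: "x \<le> K powr (1/3) * M powr (1/3)" .
  have Mb: "M powr (1/3) \<le> J1 powr b * J2 powr (1-b)"
  proof (cases "J2 \<le> J1")
    case True
    then have "M powr (1/3) = J1 powr (1/3)" unfolding M_def by simp
    also have "\<dots> \<le> J1 powr b" using J1 bb by (intro powr_mono) auto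
    also have "\<dots> \<le> J1 powr b * J2 powr (1-b)" using J2 bb
    proof -
      have "1 \<le> J2 powr (1-b)" using J2 bb by (intro ge_one_powr_ge_zero) auto
      from mult_left_mono[OF this powr_ge_zero[of J1 b]] show ?thesis by simp
    qed
    finally show ?thesis .
  next
    case False
    then have "M powr (1/3) = J2 powr (1/3)" unfolding M_def by simp
    also have "\<dots> \<le> J2 powr (1-b)" using J2 bb by (intro powr_mono) auto
    also have "\<dots> \<le> J1 powr b * J2 powr (1-b)" using J1 bb
    proof -
      have "1 \<le> J1 powr b" using J1 bb by (intro ge_one_powr_ge_zero) auto
      from mult_right_mono[OF this powr_ge_zero[of J2 "1-b"]] show ?thesis by simp
    qed
    finally show ?thesis .
  qed
  have "x * J2 powr (b-1) \<le> K powr (1/3) * (J1 powr b * J2 powr (1-b)) * J2 powr (b-1)"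
  proof (rule mult_right_mono)
    have "K powr (1/3) * M powr (1/3) \<le> K powr (1/3) * (J1 powr b * J2 powr (1-b))"
      using Mb by (rule mult_left_mono) simp
    then show "x \<le> K powr (1/3) * (J1 powr b * J2 powr (1-b))" using xb by linarith
  qed simp
  also have "\<dots> = K powr (1/3) * J1 powr b * (J2 powr (1-b) * J2 powr (b-1))" by simp
  also have "J2 powr (1-b) * J2 powr (b-1) = 1" using J2 by (simp add: powr_add[symmetric])
  finally show ?thesis unfolding x_def J1_def J2_def K_def A_def by simp
qed


theorem lemma2p2:
  fixes \<alpha>1 \<alpha>2 :: real
  assumes "\<alpha>1 \<noteq> 0" and "\<alpha>2 \<noteq> 0" and "\<alpha>1 \<noteq> \<alpha>2"
  shows "\<exists>\<epsilon>>0. \<exists>C::real. \<forall>s b \<beta>1 \<beta>2 :: real.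
           1/2 < b \<and> b \<le> 2/3 \<and> \<bar>\<beta>2 - \<beta>1\<bar> \<le> \<epsilon> \<longrightarrow>
           (\<forall>g \<in> X_space \<alpha>1 \<beta>1 s b.
              dx_hat g \<in> X_space \<alpha>2 \<beta>2 s (b - 1) \<and>
              X_norm \<alpha>2 \<beta>2 s (b - 1) (dx_hat g) \<le> C * X_norm \<alpha>1 \<beta>1 s b g)"
proof -
  define C where "C = (4/\<bar>\<alpha>2-\<alpha>1\<bar> + (2/\<bar>\<alpha>2-\<alpha>1\<bar>)*(1+2/\<bar>\<alpha>2-\<alpha>1\<bar>)) powr (1/3)"
  show ?thesis
proof (rule exI[of _ 1], intro conjI exI[of _ C] allI impI ballI)
  show "(0::real) < 1" by simp
  fix s b \<beta>1 \<beta>2 :: real and g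
  assume h: "1/2 < b \<and> b \<le> 2/3 \<and> \<bar>\<beta>2 - \<beta>1\<bar> \<le> 1"
  assume g: "g \<in> X_space \<alpha>1 \<beta>1 s b"
  have C0: "C \<ge> 0" unfolding C_def by simp
  have gm: "g \<in> borel_measurable lborel" and gf: "X_sq \<alpha>1 \<beta>1 s b g < \<infinity>"
    using g unfolding X_space_def by auto
  have c: "(\<lambda>p::real\<times>real. \<i> * complex_of_real (fst p)) \<in> borel_measurable lborel"
    unfolding measurable_lborel2 by (intro borel_measurable_continuous_onI continuous_intros)
  have dm: "dx_hat g \<in> borel_measurable lborel" unfolding dx_hat_def using borel_measurable_times[OF c gm] by simp
  have pw: "(jbr (fst p) powr s * jbr (snd p - phi \<alpha>2 \<beta>2 (fst p)) powr (b-1) * cmod (dx_hat g p)) ^ 2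
      \<le> C^2 * (jbr (fst p) powr s * jbr (snd p - phi \<alpha>1 \<beta>1 (fst p)) powr b * cmod (g p)) ^ 2" for p
  proof -
    have P: "\<bar>fst p\<bar> * jbr (snd p - phi \<alpha>2 \<beta>2 (fst p)) powr (b - 1)
      \<le> C * jbr (snd p - phi \<alpha>1 \<beta>1 (fst p)) powr b"
      unfolding C_def using pointwise[OF assms(3)] h by blast
    have "cmod (dx_hat g p) = \<bar>fst p\<bar> * cmod (g p)" unfolding dx_hat_def by (simp add: norm_mult)
    then have e: "jbr (fst p) powr s * jbr (snd p - phi \<alpha>2 \<beta>2 (fst p)) powr (b-1) * cmod (dx_hat g p)
       = (jbr (fst p) powr s * cmod (g p)) * (\<bar>fst p\<bar> * jbr (snd p - phi \<alpha>2 \<beta>2 (fst p)) powr (b - 1))"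
      by simp
    have "\<dots> \<le> (jbr (fst p) powr s * cmod (g p)) * (C * jbr (snd p - phi \<alpha>1 \<beta>1 (fst p)) powr b)"
      by (intro mult_left_mono P) auto
    also have "\<dots> = C * (jbr (fst p) powr s * jbr (snd p - phi \<alpha>1 \<beta>1 (fst p)) powr b * cmod (g p))"
      by simp
    finally have "jbr (fst p) powr s * jbr (snd p - phi \<alpha>2 \<beta>2 (fst p)) powr (b-1) * cmod (dx_hat g p)
       \<le> C * (jbr (fst p) powr s * jbr (snd p - phi \<alpha>1 \<beta>1 (fst p)) powr b * cmod (g p))"
      unfolding e .
    moreover have "0 \<le> jbr (fst p) powr s * jbr (snd p - phi \<alpha>2 \<beta>2 (fst p)) powr (b-1) * cmod (dx_hat g p)"
      by simp
    ultimately have "(jbr (fst p) powr s * jbr (snd p - phi \<alpha>2 \<beta>2 (fst p)) powr (b-1) * cmod (dx_hat g p))^2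
       \<le> (C * (jbr (fst p) powr s * jbr (snd p - phi \<alpha>1 \<beta>1 (fst p)) powr b * cmod (g p)))^2"
      by (intro power_mono)
    then show ?thesis by (simp only: power_mult_distrib)
  qed
  have le: "X_sq \<alpha>2 \<beta>2 s (b-1) (dx_hat g) \<le> ennreal (C^2) * X_sq \<alpha>1 \<beta>1 s b g"
    unfolding X_sq_def
    apply (subst nn_integral_cmult[symmetric])
     apply (rule meas_int[OF gm])
    apply (rule nn_integral_mono)
    using pw by (simp add: ennreal_mult[symmetric])
  have fin: "X_sq \<alpha>2 \<beta>2 s (b-1) (dx_hat g) < \<infinity>"
  proof -
    have "ennreal (C^2) * X_sq \<alpha>1 \<beta>1 s b g < \<infinity>" using gf by (simp add: ennreal_mult_less_top)
    then show ?thesis using le by (rule le_less_trans[rotated])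
  qed
  show "dx_hat g \<in> X_space \<alpha>2 \<beta>2 s (b - 1)" unfolding X_space_def using dm fin by simp
  have "enn2real (X_sq \<alpha>2 \<beta>2 s (b-1) (dx_hat g)) \<le> enn2real (ennreal (C^2) * X_sq \<alpha>1 \<beta>1 s b g)"
    using le gf by (intro enn2real_mono) (auto simp: ennreal_mult_less_top)
  also have "\<dots> = C^2 * enn2real (X_sq \<alpha>1 \<beta>1 s b g)" by (simp add: enn2real_mult)
  finally have "X_norm \<alpha>2 \<beta>2 s (b - 1) (dx_hat g) \<le> sqrt (C^2 * enn2real (X_sq \<alpha>1 \<beta>1 s b g))"
    unfolding X_norm_def by simp
  also have "\<dots> = C * X_norm \<alpha>1 \<beta>1 s b g" unfolding X_norm_def using C0 by (simp add: real_sqrt_mult)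
  finally have F: "X_norm \<alpha>2 \<beta>2 s (b - 1) (dx_hat g) \<le> C * X_norm \<alpha>1 \<beta>1 s b g" .
  show "X_norm \<alpha>2 \<beta>2 s (b - 1) (dx_hat g) \<le> C * X_norm \<alpha>1 \<beta>1 s b g" by (rule F)
qed
qed

end
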